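(* Let $p\ge1$ and let $\kappa_{m+1/2}$, $m\in\mathbb Z$, be real, $p$-periodic in $m$. Consider a $p$-member ensemble on $N$ patches (cyclic patch index, spacing $H$), each patch with $n\ge1$ interior points (with $n$ arbitrary, not necessarily a multiple of $p$), with field values $u^I_{i,\ell}(t)$, $i=1,\dots,n$, $\ell=0,\dots,p-1$, evolving by $$d^2\partial_t u^I_{i,\ell}=\kappa_{i+\ell+\frac12}(u^I_{i+1,\ell}-u^I_{i,\ell})+\kappa_{i+\ell-\frac12}(u^I_{i-1,\ell}-u^I_{i,\ell}),$$ (subscripts of $\kappa$ modulo $p$). Let real scalar coefficients $\mathcal I^{IJ}_{n1},\mathcal I^{IJ}_{1n}$ satisfy $\mathcal I^{IJ}_{1n}=\mathcal I^{JI}_{n1}$ for all $I,J$ (as for the spectral or Lagrangian interpolation coefficients). Couple the patches across ensemble members by $$u^I_{0,m}=\sum_J\mathcal I^{IJ}_{1n}\,u^J_{n,(m-n)\bmod p},\qquad u^I_{n+1,m}=\sum_J\mathcal I^{IJ}_{n1}\,u^J_{1,(m+n)\bmod p},\qquad m=0,\dots,p-1,$$ so that each edge value is interpolated from a member whose corresponding next-to-edge diffusivity is the same. Then the resulting linear system $\partial_t\mathbf u=\mathcal L\mathbf u$ on all interior values $\mathbf u\in\mathbb R^{nNp}$ has a real symmetric (self-adjoint) matrix $\mathcal L$.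
   Context: Member $\ell$ of the ensemble is the heterogeneous lattice diffusion with diffusivities phase-shifted by $\ell$: in member $\ell$, the diffusivity between lattice points $i$ and $i+1$ is $\kappa_{i+\ell+1/2}$; thus the left-edge diffusivity of member $m$ is $\kappa_{m+1/2}$ and the right-edge diffusivity of member $m$ is $\kappa_{n+m+1/2}$. *)

theory Defs
  imports Main Complex_Main
begin

text \<open>Patches are indexed by I < N, interior points by 1 \<le> i \<le> n,
ensemble members by l < p.  A field state is u :: nat \<times> nat \<times> nat \<Rightarrow> real,
u (I, i, l) = u^I_{i,l}.  The diffusivity kappa_{m+1/2} is written kap m (m :: int).\<close>

definition interior_idx :: "nat \<Rightarrow> nat \<Rightarrow> nat \<Rightarrow> (nat \<times> nat \<times> nat) set" where
  "interior_idx N n p = {(I, i, l). I < N \<and> 1 \<le> i \<and> i \<le> n \<and> l < p}"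

definition ext_val :: "nat \<Rightarrow> nat \<Rightarrow> nat \<Rightarrow> (nat \<Rightarrow> nat \<Rightarrow> real) \<Rightarrow> (nat \<Rightarrow> nat \<Rightarrow> real)
    \<Rightarrow> (nat \<times> nat \<times> nat \<Rightarrow> real) \<Rightarrow> nat \<Rightarrow> nat \<Rightarrow> nat \<Rightarrow> real" where
  "ext_val N n p C1n Cn1 u I i m =
     (if i = 0 then (\<Sum>J<N. C1n I J * u (J, n, nat ((int m - int n) mod int p)))
      else if i = n + 1 then (\<Sum>J<N. Cn1 I J * u (J, 1, nat ((int m + int n) mod int p)))
      else u (I, i, m))"

definition ens_rhs :: "nat \<Rightarrow> nat \<Rightarrow> nat \<Rightarrow> real \<Rightarrow> (int \<Rightarrow> real) \<Rightarrow> (nat \<Rightarrow> nat \<Rightarrow> real)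
    \<Rightarrow> (nat \<Rightarrow> nat \<Rightarrow> real) \<Rightarrow> (nat \<times> nat \<times> nat \<Rightarrow> real) \<Rightarrow> nat \<times> nat \<times> nat \<Rightarrow> real" where
  "ens_rhs N n p d kap C1n Cn1 u x =
     (case x of (I, i, l) \<Rightarrow>
       (kap (int i + int l) * (ext_val N n p C1n Cn1 u I (i + 1) l - u (I, i, l))
        + kap (int i + int l - 1) * (ext_val N n p C1n Cn1 u I (i - 1) l - u (I, i, l))) / d\<^sup>2)"

end

theory Submission
  imports Defs
begin

lemma kap_per_nat:
  assumes "\<And>m. kap (m + int p) = kap m"
  shows "kap (b + int k * int p) = (kap b :: real)"
proof (induction k arbitrary: b)
  case 0 then show ?case by simp
next
  case (Suc k)
  have "b + int (Suc k) * int p = (b + int k * int p) + int p" by (simp add: algebra_simps)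
  then show ?case using assms Suc by (metis add.assoc)
qed

lemma kap_per_int:
  assumes "\<And>m. kap (m + int p) = kap m"
  shows "kap (b + k * int p) = (kap b :: real)"
proof (cases "k \<ge> 0")
  case True
  then obtain k' where "k = int k'" by (rule nonneg_eq_int)
  then show ?thesis using kap_per_nat[where kap=kap and p=p, OF assms] by simp
next
  case False
  define k' where "k' = nat (- k)"
  then have k: "k = - int k'" using False by simp
  have "kap b = kap ((b + k * int p) + int k' * int p)" using k by (simp add: algebra_simps)
  also have "\<dots> = kap (b + k * int p)" using kap_per_nat[where kap=kap and p=p, OF assms] by blast
  finally show ?thesis by simp
qed

lemma kap_mod:
  assumes "\<And>m. kap (m + int p) = kap m"
  shows "kap (a mod int p) = (kap a :: real)"
proof -
  have "a = a mod int p + (a div int p) * int p" by simp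
  then show ?thesis using kap_per_int[where kap=kap and p=p, OF assms, of "a mod int p" "a div int p"] by simp
qed

lemma ens_lin:
  assumes fin: "finite S"
  shows "ens_rhs N n p d kap C1n Cn1 (\<lambda>z. \<Sum>y\<in>S. c y * f y z) x
       = (\<Sum>y\<in>S. c y * ens_rhs N n p d kap C1n Cn1 (f y) x)"
proof -
  obtain I i l where x: "x = (I, i, l)" by (cases x) auto
  have e: "ext_val N n p C1n Cn1 (\<lambda>z. \<Sum>y\<in>S. c y * f y z) I k l
     = (\<Sum>y\<in>S. c y * ext_val N n p C1n Cn1 (f y) I k l)" for k
    by (simp add: ext_val_def sum_distrib_left sum_distrib_right sum.swap[of _ "{..<N}"] mult_ac)
  let ?a = "\<lambda>y. kap (int i + int l) * (ext_val N n p C1n Cn1 (f y) I (i + 1) l - f y (I, i, l))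
     + kap (int i + int l - 1) * (ext_val N n p C1n Cn1 (f y) I (i - 1) l - f y (I, i, l))"
  have "ens_rhs N n p d kap C1n Cn1 (\<lambda>z. \<Sum>y\<in>S. c y * f y z) x = (\<Sum>y\<in>S. c y * ?a y) / d\<^sup>2"
    unfolding x ens_rhs_def by (simp add: e sum_distrib_left sum_subtractf[symmetric]
       sum.distrib[symmetric] algebra_simps)
  also have "\<dots> = (\<Sum>y\<in>S. c y * ens_rhs N n p d kap C1n Cn1 (f y) x)"
    unfolding x ens_rhs_def by (simp add: sum_divide_distrib)
  finally show ?thesis .
qed

lemma ens_cong:
  assumes "\<And>z. z \<in> interior_idx N n p \<Longrightarrow> u z = v z" "x \<in> interior_idx N n p"
  shows "ens_rhs N n p d kap C1n Cn1 u x = ens_rhs N n p d kap C1n Cn1 v x"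
proof -
  obtain I i l where x: "x = (I, i, l)" by (cases x) auto
  have p: "p > 0" using assms(2) x by (auto simp: interior_idx_def)
  have m1: "nat ((int a - int n) mod int p) < p" for a using p
    by (simp add: nat_less_iff)
  have m2: "nat ((int a + int n) mod int p) < p" for a using p
    by (simp add: nat_less_iff)
  have xs: "I < N" "1 \<le> i" "i \<le> n" "l < p" using assms(2) x by (auto simp: interior_idx_def)
  have e: "ext_val N n p C1n Cn1 u I k l = ext_val N n p C1n Cn1 v I k l" if "k \<le> n + 1" for k
  proof -
    have n1: "n \<ge> 1" using xs by simp
    show ?thesis unfolding ext_val_def using that xs m1 m2 n1
      by (auto intro!: sum.cong arg_cong2[where f="(*)"] assms(1) simp: interior_idx_def)
  qed
  have "u x = v x" using assms by auto
  then show ?thesis unfolding x ens_rhs_def using e xs by simp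
qed

lemma modeq:
  fixes l m n p :: nat
  assumes "l < p" "m < p"
  shows "(m = nat ((int l + int n) mod int p)) \<longleftrightarrow> (l = nat ((int m - int n) mod int p))"
proof
  assume h: "m = nat ((int l + int n) mod int p)"
  have p: "p > 0" using assms by simp
  have "int m = (int l + int n) mod int p" using h p by simp
  then have "(int m - int n) mod int p = ((int l + int n) - int n) mod int p"
    by (metis mod_diff_left_eq)
  then show "l = nat ((int m - int n) mod int p)" using assms by simp
next
  assume h: "l = nat ((int m - int n) mod int p)"
  have p: "p > 0" using assms by simp
  have "int l = (int m - int n) mod int p" using h p by simp
  then have "(int l + int n) mod int p = ((int m - int n) + int n) mod int p"
    by (metis mod_add_left_eq)
  then show "m = nat ((int l + int n) mod int p)" using assms by simp
qed

definition dl :: "nat \<times> nat \<times> nat \<Rightarrow> nat \<times> nat \<times> nat \<Rightarrow> real" where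
  "dl y z = (if z = y then 1 else 0)"

lemma ext_right:
  assumes "J < N" "n \<ge> 1"
  shows "ext_val N n p C1n Cn1 (dl (J, j, m)) I (n + 1) l
       = (if j = 1 \<and> m = nat ((int l + int n) mod int p) then Cn1 I J else 0)"
  using assms by (auto simp: ext_val_def dl_def if_distrib[of "(*) _"] sum.delta cong: if_cong)

lemma ext_left:
  assumes "J < N"
  shows "ext_val N n p C1n Cn1 (dl (J, j, m)) I 0 l
       = (if j = n \<and> m = nat ((int l - int n) mod int p) then C1n I J else 0)"
  using assms by (auto simp: ext_val_def dl_def if_distrib[of "(*) _"] sum.delta cong: if_cong)

lemma ext_mid:
  assumes "0 < k" "k < n + 1"
  shows "ext_val N n p C1n Cn1 u I k l = u (I, k, l)"
  using assms by (simp add: ext_val_def)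

lemma key:
  assumes per: "\<And>m. kap (m + int p) = kap m"
    and C: "\<And>I J. I < N \<Longrightarrow> J < N \<Longrightarrow> C1n I J = Cn1 J I"
    and x: "(I, i, l) \<in> interior_idx N n p" and y: "(J, j, m) \<in> interior_idx N n p"
  shows "kap (int i + int l) * ext_val N n p C1n Cn1 (dl (J, j, m)) I (i + 1) l
       = kap (int j + int m - 1) * ext_val N n p C1n Cn1 (dl (I, i, l)) J (j - 1) m"
proof -
  have xs: "I < N" "1 \<le> i" "i \<le> n" "l < p" using x by (auto simp: interior_idx_def)
  have ys: "J < N" "1 \<le> j" "j \<le> n" "m < p" using y by (auto simp: interior_idx_def)
  show ?thesis
  proof (cases "i = n")
    case True
    have L: "ext_val N n p C1n Cn1 (dl (J, j, m)) I (i + 1) l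
       = (if j = 1 \<and> m = nat ((int l + int n) mod int p) then Cn1 I J else 0)"
      using ext_right[of J N n] True xs ys by simp
    show ?thesis
    proof (cases "j = 1")
      case j1: True
      have R: "ext_val N n p C1n Cn1 (dl (I, i, l)) J (j - 1) m
        = (if i = n \<and> l = nat ((int m - int n) mod int p) then C1n J I else 0)"
        using ext_left[of I N n] j1 xs by simp
      show ?thesis
      proof (cases "m = nat ((int l + int n) mod int p)")
        case mm: True
        have "int m = (int l + int n) mod int p" using mm xs by simp
        then have k: "kap (int m) = kap (int l + int n)" using kap_mod[where kap=kap and p=p, OF per] by simp
        have ll: "l = nat ((int m - int n) mod int p)" using mm modeq[OF xs(4) ys(4), of n] by blast
        have L': "ext_val N n p C1n Cn1 (dl (J, j, m)) I (i + 1) l = Cn1 I J" using L mm j1 by simp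
        have R': "ext_val N n p C1n Cn1 (dl (I, i, l)) J (j - 1) m = Cn1 I J"
          using R ll True C[OF ys(1) xs(1)] by simp
        have kk: "kap (int j + int m - 1) = kap (int i + int l)" using k j1 True by (simp add: add.commute)
        show ?thesis unfolding L' R' kk ..
      next
        case False
        then show ?thesis using L R modeq[OF xs(4) ys(4), of n] by simp
      qed
    next
      case j1: False
      have R: "ext_val N n p C1n Cn1 (dl (I, i, l)) J (j - 1) m = dl (I, i, l) (J, j - 1, m)"
        using ext_mid[of "j - 1" n] j1 ys by simp
      show ?thesis using L R j1 True ys by (auto simp: dl_def)
    qed
  next
    case False
    have L: "ext_val N n p C1n Cn1 (dl (J, j, m)) I (i + 1) l = dl (J, j, m) (I, i + 1, l)"
      using ext_mid[of "i + 1" n] False xs by simp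
    show ?thesis
    proof (cases "j = 1")
      case j1: True
      have R: "ext_val N n p C1n Cn1 (dl (I, i, l)) J (j - 1) m
        = (if i = n \<and> l = nat ((int m - int n) mod int p) then C1n J I else 0)"
        using ext_left[of I N n] j1 xs by simp
      show ?thesis using L R j1 False xs by (auto simp: dl_def)
    next
      case j1: False
      have R: "ext_val N n p C1n Cn1 (dl (I, i, l)) J (j - 1) m = dl (I, i, l) (J, j - 1, m)"
        using ext_mid[of "j - 1" n] j1 ys by simp
      show ?thesis using L R j1 xs ys by (auto simp: dl_def)
    qed
  qed
qed

theorem mainTheorem3:
  fixes N n p :: nat and d :: real and kap :: "int \<Rightarrow> real"
    and C1n Cn1 :: "nat \<Rightarrow> nat \<Rightarrow> real"
  assumes "p \<ge> 1" and "n \<ge> 1" and "N \<ge> 1" and "d > 0"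
    and "\<And>m. kap (m + int p) = kap m"
    and "\<And>I J. I < N \<Longrightarrow> J < N \<Longrightarrow> C1n I J = Cn1 J I"
  shows "\<exists>L :: nat \<times> nat \<times> nat \<Rightarrow> nat \<times> nat \<times> nat \<Rightarrow> real.
           (\<forall>u. \<forall>x\<in>interior_idx N n p.
              ens_rhs N n p d kap C1n Cn1 u x = (\<Sum>y\<in>interior_idx N n p. L x y * u y))
         \<and> (\<forall>x\<in>interior_idx N n p. \<forall>y\<in>interior_idx N n p. L x y = L y x)"
proof -
  define S where "S = interior_idx N n p"
  define L where "L = (\<lambda>x y. ens_rhs N n p d kap C1n Cn1 (dl y) x)"
  have finS: "finite S"
  proof -
    have "S \<subseteq> {..<N} \<times> {..n} \<times> {..<p}" by (auto simp: S_def interior_idx_def)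
    then show ?thesis by (rule finite_subset) auto
  qed
  have rep: "ens_rhs N n p d kap C1n Cn1 u x = (\<Sum>y\<in>S. L x y * u y)" if "x \<in> S" for u x
  proof -
    have "ens_rhs N n p d kap C1n Cn1 u x = ens_rhs N n p d kap C1n Cn1 (\<lambda>z. \<Sum>y\<in>S. u y * dl y z) x"
      by (rule ens_cong) (use that finS in \<open>auto simp: S_def dl_def if_distrib[of "(*) _"] sum.delta cong: if_cong\<close>)
    also have "\<dots> = (\<Sum>y\<in>S. u y * L x y)" unfolding L_def by (rule ens_lin[OF finS])
    finally show ?thesis by (simp add: mult_ac)
  qed
  have sym: "L x y = L y x" if "x \<in> S" "y \<in> S" for x y
  proof -
    obtain I i l where x: "x = (I, i, l)" by (cases x) auto
    obtain J j m where y: "y = (J, j, m)" by (cases y) auto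
    have xS: "(I, i, l) \<in> interior_idx N n p" and yS: "(J, j, m) \<in> interior_idx N n p"
      using that x y by (auto simp: S_def)
    have k1: "kap (int i + int l) * ext_val N n p C1n Cn1 (dl (J, j, m)) I (i + 1) l
       = kap (int j + int m - 1) * ext_val N n p C1n Cn1 (dl (I, i, l)) J (j - 1) m"
      by (rule key) (use assms(5,6) xS yS in auto)
    have k2: "kap (int j + int m) * ext_val N n p C1n Cn1 (dl (I, i, l)) J (j + 1) m
       = kap (int i + int l - 1) * ext_val N n p C1n Cn1 (dl (J, j, m)) I (i - 1) l"
      by (rule key) (use assms(5,6) xS yS in auto)
    show ?thesis
    proof (cases "x = y")
      case True then show ?thesis by simp
    next
      case False
      then have z1: "dl (J, j, m) (I, i, l) = 0" "dl (I, i, l) (J, j, m) = 0"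
        using x y by (auto simp: dl_def)
      have Lxy: "L x y = (kap (int i + int l) * ext_val N n p C1n Cn1 (dl (J, j, m)) I (i + 1) l
          + kap (int i + int l - 1) * ext_val N n p C1n Cn1 (dl (J, j, m)) I (i - 1) l) / d\<^sup>2"
        unfolding L_def x y ens_rhs_def using z1 by simp
      have Lyx: "L y x = (kap (int j + int m) * ext_val N n p C1n Cn1 (dl (I, i, l)) J (j + 1) m
          + kap (int j + int m - 1) * ext_val N n p C1n Cn1 (dl (I, i, l)) J (j - 1) m) / d\<^sup>2"
        unfolding L_def x y ens_rhs_def using z1 by simp
      show ?thesis unfolding Lxy Lyx k1 k2 by (simp add: add.commute)
    qed
  qed
  show ?thesis using rep sym unfolding S_def by blast
qed

end
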